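(* Let $n\ge 2$ and $\pi\in RC(n)$. If $\pi$ is alternating ($\pi_1<\pi_2>\pi_3<\cdots$), then for every $i$ with $1<i<n$: $\pi_i>\max(\pi_1,\pi_n)$ if $i$ is even and $\pi_i<\min(\pi_1,\pi_n)$ if $i$ is odd. If $\pi$ is reverse-alternating ($\pi_1>\pi_2<\pi_3>\cdots$), then for every $i$ with $1<i<n$: $\pi_i<\min(\pi_1,\pi_n)$ if $i$ is even and $\pi_i>\max(\pi_1,\pi_n)$ if $i$ is odd.
   Context: Permutations of $[n]=\{1,\dots,n\}$ are written in one-line notation $\pi=(\pi_1,\dots,\pi_n)$; $S_n$ is the set of all of them. For a sequence $\tau=(\tau_1,\dots,\tau_m)$ of distinct numbers with $m\ge 2$, let $i(\tau)$ be the number of maximal increasing runs of consecutive entries of length at least $2$, and $d(\tau)$ the number of maximal decreasing runs of consecutive entries of length at least $2$; set $id(\tau)=i(\tau)+d(\tau)$. Equivalently, $id(\tau)=1+\#\{k: 2\le k\le m-1,\ (\tau_k-\tau_{k-1})(\tau_{k+1}-\tau_k)<0\}$. For $\pi\in S_n$, let $X(\pi)$ be the collection of all subsequences $\tau=(\pi_{j_1},\dots,\pi_{j_m})$ with $j_1<\dots<j_m$ and $m\ge 3$, and $t(\pi)=\sum_{\tau\in X(\pi)} id(\tau)$. Define $RC(n)=\{\pi\in S_n : t(\pi)=\max_{\sigma\in S_n} t(\sigma)\}$. *)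

theory Defs
  imports Main "HOL-Library.Sublist"
begin

definition perms :: "nat \<Rightarrow> nat list set" where
  "perms n = {p. distinct p \<and> set p = {1..n}}"

(* id(tau) = 1 + number of interior turning points (peaks/valleys), for length >= 2 *)
definition idstat :: "nat list \<Rightarrow> nat" where
  "idstat \<tau> = 1 + card {k. 1 \<le> k \<and> k + 1 < length \<tau> \<and>
      (int (\<tau> ! k) - int (\<tau> ! (k - 1))) * (int (\<tau> ! (k + 1)) - int (\<tau> ! k)) < 0}"

definition tstat :: "nat list \<Rightarrow> nat" where
  "tstat p = (\<Sum>J \<in> {J. J \<subseteq> {0..<length p} \<and> 3 \<le> card J}. idstat (nths p J))"

definition RC :: "nat \<Rightarrow> nat list set" where
  "RC n = {p \<in> perms n. tstat p = Max (tstat ` perms n)}"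

abbreviation ent :: "nat list \<Rightarrow> nat \<Rightarrow> nat" where
  "ent p i \<equiv> p ! (i - 1)"

definition alternating :: "nat list \<Rightarrow> bool" where
  "alternating p = (\<forall>i. 1 \<le> i \<and> i < length p \<longrightarrow>
      (if odd i then ent p i < ent p (i + 1) else ent p i > ent p (i + 1)))"

definition rev_alternating :: "nat list \<Rightarrow> bool" where
  "rev_alternating p = (\<forall>i. 1 \<le> i \<and> i < length p \<longrightarrow>
      (if odd i then ent p i > ent p (i + 1) else ent p i < ent p (i + 1)))"

end

theory Submission
  imports Defs "HOL-Library.Multiset"
begin

definition nm :: "nat list \<Rightarrow> nat \<Rightarrow> nat \<Rightarrow> nat \<Rightarrow> bool" where
  "nm p a b c = ((p!a < p!b \<and> p!c < p!b) \<or> (p!b < p!a \<and> p!b < p!c))"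

lemma prod_neg_iff: "((int x - int w) * (int z - int x) < 0) = ((w<x \<and> z<x) \<or> (x<w \<and> x<z))"
  by (auto simp: mult_less_0_iff)

definition adj :: "nat set \<Rightarrow> nat \<Rightarrow> nat \<Rightarrow> bool" where
  "adj J a b = (a \<in> J \<and> b \<in> J \<and> a < b \<and> (\<forall>x\<in>J. \<not> (a < x \<and> x < b)))"

definition C3 :: "nat set \<Rightarrow> (nat \<times> nat \<times> nat) set" where
  "C3 J = {(a,b,c). adj J a b \<and> adj J b c}"

definition FF :: "nat \<Rightarrow> nat set set" where
  "FF n = {J. J \<subseteq> {0..<n} \<and> 3 \<le> card J}"

definition Tri :: "nat \<Rightarrow> (nat \<times> nat \<times> nat) set" where
  "Tri n = {(a,b,c). a < b \<and> b < c \<and> c < n}"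

lemma zip_upt: "zip xs [0..<length xs] = map (\<lambda>i. (xs!i,i)) [0..<length xs]"
  by (rule nth_equalityI) auto

lemma nths_eq: "nths p J = map (nth p) (filter (\<lambda>i. i\<in>J) [0..<length p])"
  unfolding nths_def zip_upt by (simp add: filter_map comp_def)

lemma ss_less_iff:
  fixes xs :: "nat list"
  assumes "sorted_wrt (<) xs" "i < length xs" "m < length xs"
  shows "(xs!i < xs!m) = (i < m)"
proof
  assume "xs!i < xs!m"
  show "i < m"
  proof (rule ccontr)
    assume "\<not> i < m"
    then have "m < i \<or> m = i" by auto
    then show False
    proof
      assume "m < i" then show False using sorted_wrt_nth_less[OF assms(1), of m i] assms \<open>xs!i < xs!m\<close> by linarith
    next
      assume "m = i" then show False using \<open>xs!i < xs!m\<close> by simp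
    qed
  qed
next
  assume "i < m" then show "xs!i < xs!m" using sorted_wrt_nth_less[OF assms(1)] assms by auto
qed

lemma adj_idx:
  fixes xs :: "nat list"
  assumes ss: "sorted_wrt (<) xs" and ad: "adj (set xs) a b" and m: "m < length xs" "xs!m = b"
  shows "0 < m \<and> xs!(m-1) = a"
proof -
  from ad have "a \<in> set xs" "a < b" and nb: "\<forall>x\<in>set xs. \<not> (a < x \<and> x < b)" by (auto simp: adj_def)
  then obtain i where i: "i < length xs" "xs!i = a" by (auto simp: in_set_conv_nth)
  have "i < m" using ss_less_iff[OF ss i(1) m(1)] i m \<open>a<b\<close> by auto
  then have "0 < m" by auto
  have "i \<le> m - 1" using \<open>i<m\<close> by auto
  have le: "a \<le> xs!(m-1)"
  proof (cases "i = m - 1")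
    case True then show ?thesis using i by auto
  next
    case False then have "i < m - 1" using \<open>i \<le> m-1\<close> by auto
    moreover have "m - 1 < length xs" using m by auto
    ultimately show ?thesis using ss_less_iff[OF ss i(1), of "m-1"] i by auto
  qed
  have lt: "xs!(m-1) < b" using ss_less_iff[OF ss, of "m-1" m] m \<open>0<m\<close> by auto
  have "xs!(m-1) \<in> set xs" using m by auto
  then show ?thesis using nb le lt \<open>0<m\<close> by force
qed

lemma ss_inj:
  fixes xs :: "nat list"
  assumes "sorted_wrt (<) xs" "i < length xs" "m < length xs" "xs!i = xs!m"
  shows "i = m"
  using ss_less_iff[OF assms(1) assms(2,3)] ss_less_iff[OF assms(1) assms(3,2)] assms(4)
  by (metis less_irrefl linorder_neqE_nat)

lemma adj_nth:
  fixes xs :: "nat list"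
  assumes ss: "sorted_wrt (<) xs" and k: "0 < k" "k < length xs"
  shows "adj (set xs) (xs!(k-1)) (xs!k)"
proof -
  have "xs!(k-1) < xs!k" using ss_less_iff[OF ss, of "k-1" k] k by auto
  moreover have "\<not> (xs!(k-1) < x \<and> x < xs!k)" if "x \<in> set xs" for x
  proof
    assume h: "xs!(k-1) < x \<and> x < xs!k"
    from that obtain i where i: "i < length xs" "xs!i = x" by (auto simp: in_set_conv_nth)
    have "k - 1 < i" using ss_less_iff[OF ss, of "k-1" i] h i k by auto
    moreover have "i < k" using ss_less_iff[OF ss, of i k] h i k by auto
    ultimately show False by auto
  qed
  ultimately show ?thesis using k by (auto simp: adj_def)
qed

lemma turns:
  assumes J: "J \<subseteq> {0..<length p}"
  shows "card {k. 1 \<le> k \<and> k + 1 < length (nths p J) \<and>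
      (int (nths p J ! k) - int (nths p J ! (k - 1))) * (int (nths p J ! (k + 1)) - int (nths p J ! k)) < 0}
    = card {(a,b,c). (a,b,c) \<in> C3 J \<and> nm p a b c}"
proof -
  define xs where "xs = filter (\<lambda>i. i\<in>J) [0..<length p]"
  have ss: "sorted_wrt (<) xs" unfolding xs_def by (intro sorted_wrt_filter) simp
  have sx: "set xs = J" unfolding xs_def using J by auto
  have nt: "nths p J = map (nth p) xs" unfolding xs_def by (rule nths_eq)
  have e1: "{k. 1 \<le> k \<and> k + 1 < length (nths p J) \<and>
      (int (nths p J ! k) - int (nths p J ! (k - 1))) * (int (nths p J ! (k + 1)) - int (nths p J ! k)) < 0}
     = {k. 1 \<le> k \<and> k + 1 < length xs \<and> nm p (xs!(k-1)) (xs!k) (xs!(k+1))}"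
    unfolding nt by (auto simp: prod_neg_iff nm_def)
  define g where "g k = (xs!(k-1), xs!k, xs!(k+1))" for k
  have bij: "bij_betw g {k. 1 \<le> k \<and> k + 1 < length xs \<and> nm p (xs!(k-1)) (xs!k) (xs!(k+1))}
                       {(a,b,c). (a,b,c) \<in> C3 J \<and> nm p a b c}"
    unfolding bij_betw_def
  proof
    show "inj_on g {k. 1 \<le> k \<and> k + 1 < length xs \<and> nm p (xs!(k-1)) (xs!k) (xs!(k+1))}"
      by (auto simp: inj_on_def g_def dest: ss_inj[OF ss])
  next
    show "g ` {k. 1 \<le> k \<and> k + 1 < length xs \<and> nm p (xs!(k-1)) (xs!k) (xs!(k+1))}
       = {(a,b,c). (a,b,c) \<in> C3 J \<and> nm p a b c}"
    proof
      show "g ` {k. 1 \<le> k \<and> k + 1 < length xs \<and> nm p (xs!(k-1)) (xs!k) (xs!(k+1))}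
       \<subseteq> {(a,b,c). (a,b,c) \<in> C3 J \<and> nm p a b c}"
      proof
        fix t assume "t \<in> g ` {k. 1 \<le> k \<and> k + 1 < length xs \<and> nm p (xs!(k-1)) (xs!k) (xs!(k+1))}"
        then obtain k where k: "1 \<le> k" "k + 1 < length xs" "nm p (xs!(k-1)) (xs!k) (xs!(k+1))" "t = g k" by auto
        have "adj J (xs!(k-1)) (xs!k)" using adj_nth[OF ss, of k] k sx by auto
        moreover have "adj J (xs!k) (xs!(k+1))" using adj_nth[OF ss, of "k+1"] k sx by auto
        ultimately show "t \<in> {(a,b,c). (a,b,c) \<in> C3 J \<and> nm p a b c}" using k by (auto simp: g_def C3_def)
      qed
    next
      show "{(a,b,c). (a,b,c) \<in> C3 J \<and> nm p a b c} \<subseteq>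
         g ` {k. 1 \<le> k \<and> k + 1 < length xs \<and> nm p (xs!(k-1)) (xs!k) (xs!(k+1))}"
      proof clarify
        fix a b c assume h: "(a,b,c) \<in> C3 J" "nm p a b c"
        then have ab: "adj (set xs) a b" and bc: "adj (set xs) b c" using sx by (auto simp: C3_def)
        then have "b \<in> set xs" by (auto simp: adj_def)
        then obtain m where m: "m < length xs" "xs!m = b" by (auto simp: in_set_conv_nth)
        have "c \<in> set xs" using bc by (auto simp: adj_def)
        then obtain m' where m': "m' < length xs" "xs!m' = c" by (auto simp: in_set_conv_nth)
        have A: "0 < m \<and> xs!(m-1) = a" using adj_idx[OF ss ab m] .
        have B: "0 < m' \<and> xs!(m'-1) = b" using adj_idx[OF ss bc m'] .
        have "m' - 1 = m" using ss_inj[OF ss, of "m'-1" m] B m m' by auto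
        then have "m' = m + 1" using B by auto
        then have "g m = (a,b,c)" "1 \<le> m" "m + 1 < length xs" using A m m' by (auto simp: g_def)
        then show "(a,b,c) \<in> g ` {k. 1 \<le> k \<and> k + 1 < length xs \<and> nm p (xs!(k-1)) (xs!k) (xs!(k+1))}"
          using h(2) A m \<open>m' = m+1\<close> m' by (auto intro!: image_eqI[of _ _ m])
      qed
    qed
  qed
  show ?thesis unfolding e1 using bij_betw_same_card[OF bij] .
qed

lemma count_J:
  assumes abc: "a < b" "b < c" "c < n"
  shows "card {J \<in> FF n. (a,b,c) \<in> C3 J} = 2^a * 2^(n-1-c)"
proof -
  define h where "h = (\<lambda>(A::nat set,B::nat set). A \<union> {a,b,c} \<union> B)"
  define h' where "h' = (\<lambda>J::nat set. (J \<inter> {..<a}, J \<inter> {Suc c..<n}))"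
  have bij: "bij_betw h (Pow {..<a} \<times> Pow {Suc c..<n}) {J \<in> FF n. (a,b,c) \<in> C3 J}"
  proof (rule bij_betw_byWitness[where f'=h'])
    show "\<forall>x\<in>Pow {..<a} \<times> Pow {Suc c..<n}. h' (h x) = x"
      using abc by (auto simp: h_def h'_def)
    show "\<forall>J\<in>{J \<in> FF n. (a,b,c) \<in> C3 J}. h (h' J) = J"
    proof
      fix J assume "J \<in> {J \<in> FF n. (a,b,c) \<in> C3 J}"
      then have J: "J \<subseteq> {0..<n}" "adj J a b" "adj J b c" by (auto simp: FF_def C3_def)
      show "h (h' J) = J"
      proof
        show "h (h' J) \<subseteq> J" using J by (auto simp: h_def h'_def adj_def)
        show "J \<subseteq> h (h' J)"
        proof
          fix x assume "x \<in> J"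
          then show "x \<in> h (h' J)" using J unfolding h_def h'_def adj_def
            by (cases "x < a"; cases "x < b"; cases "x < c"; cases "x = a"; cases "x = b"; cases "x = c"; force)
        qed
      qed
    qed
    show "h ` (Pow {..<a} \<times> Pow {Suc c..<n}) \<subseteq> {J \<in> FF n. (a,b,c) \<in> C3 J}"
    proof (rule image_subsetI)
      fix x assume "x \<in> Pow {..<a} \<times> Pow {Suc c..<n}"
      then obtain A B where x: "x = (A,B)" and AB: "A \<subseteq> {..<a}" "B \<subseteq> {Suc c..<n}" by auto
      have sub: "h (A,B) \<subseteq> {0..<n}" using AB abc by (auto simp: h_def)
      have "card {a,b,c} \<le> card (h (A,B))"
        by (rule card_mono) (use sub finite_subset in \<open>auto simp: h_def\<close>)
      moreover have "card {a,b,c} = 3" using abc by auto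
      ultimately have "h (A,B) \<in> FF n" using sub by (auto simp: FF_def)
      moreover have "(a,b,c) \<in> C3 (h (A,B))" using AB abc by (auto simp: h_def C3_def adj_def)
      ultimately show "h x \<in> {J \<in> FF n. (a,b,c) \<in> C3 J}" using x by auto
    qed
    show "h' ` {J \<in> FF n. (a,b,c) \<in> C3 J} \<subseteq> Pow {..<a} \<times> Pow {Suc c..<n}"
      by (auto simp: h'_def)
  qed
  have "card {J \<in> FF n. (a,b,c) \<in> C3 J} = card (Pow {..<a} \<times> Pow {Suc c..<n})"
    using bij_betw_same_card[OF bij] by simp
  also have "\<dots> = 2^a * 2^(n-1-c)" by (simp add: card_cartesian_product card_Pow)
  finally show ?thesis .
qed

definition W :: "nat list \<Rightarrow> nat \<Rightarrow> nat \<times> nat \<times> nat \<Rightarrow> nat" where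
  "W p n t = (case t of (a,b,c) \<Rightarrow> if nm p a b c then 2^a * 2^(n-1-c) else 0)"

lemma finite_FF: "finite (FF n)"
  by (rule finite_subset[of _ "Pow {0..<n}"]) (auto simp: FF_def)

lemma finite_Tri: "finite (Tri n)"
  by (rule finite_subset[of _ "{..<n} \<times> {..<n} \<times> {..<n}"]) (auto simp: Tri_def)

lemma C3_Tri: "J \<subseteq> {0..<n} \<Longrightarrow> C3 J \<subseteq> Tri n"
  by (auto simp: C3_def Tri_def adj_def)

lemma tstat_formula:
  assumes "length p = n"
  shows "tstat p = card (FF n) + (\<Sum>t\<in>Tri n. W p n t)"
proof -
  let ?nt = "\<lambda>t. case t of (a,b,c) \<Rightarrow> nm p a b c"
  have e0: "{J. J \<subseteq> {0..<length p} \<and> 3 \<le> card J} = FF n" using assms by (auto simp: FF_def)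
  have e1: "idstat (nths p J) = 1 + (\<Sum>t\<in>Tri n. if t \<in> C3 J \<and> ?nt t then 1 else 0)" if "J \<in> FF n" for J
  proof -
    have J: "J \<subseteq> {0..<length p}" using that assms by (auto simp: FF_def)
    have "{(a,b,c). (a,b,c) \<in> C3 J \<and> nm p a b c} = {t \<in> Tri n. t \<in> C3 J \<and> ?nt t}"
      using C3_Tri[of J n] J assms by auto
    then have "card {(a,b,c). (a,b,c) \<in> C3 J \<and> nm p a b c} = (\<Sum>t\<in>Tri n. if t \<in> C3 J \<and> ?nt t then 1 else 0)"
      by (simp add: sum.If_cases finite_Tri Int_def)
    then show ?thesis unfolding idstat_def turns[OF J] by simp
  qed
  have "tstat p = (\<Sum>J\<in>FF n. 1 + (\<Sum>t\<in>Tri n. if t \<in> C3 J \<and> ?nt t then 1 else 0))"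
    unfolding tstat_def e0 using e1 by (rule sum.cong[OF refl])
  also have "\<dots> = card (FF n) + (\<Sum>J\<in>FF n. \<Sum>t\<in>Tri n. if t \<in> C3 J \<and> ?nt t then 1 else 0)"
    by (subst sum.distrib) simp
  also have "(\<Sum>J\<in>FF n. \<Sum>t\<in>Tri n. if t \<in> C3 J \<and> ?nt t then 1 else 0)
      = (\<Sum>t\<in>Tri n. \<Sum>J\<in>FF n. if t \<in> C3 J \<and> ?nt t then 1 else 0)"
    by (rule sum.swap)
  also have "\<dots> = (\<Sum>t\<in>Tri n. W p n t)"
  proof (rule sum.cong[OF refl])
    fix t assume t: "t \<in> Tri n"
    obtain a b c where tt: "t = (a,b,c)" by (cases t) auto
    have abc: "a < b" "b < c" "c < n" using t tt by (auto simp: Tri_def)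
    have "(\<Sum>J\<in>FF n. if t \<in> C3 J \<and> ?nt t then 1 else 0) = (if ?nt t then card {J \<in> FF n. t \<in> C3 J} else 0)"
      by (simp add: sum.If_cases finite_FF Int_def)
    also have "\<dots> = W p n t" using count_J[OF abc] tt by (simp add: W_def)
    finally show "(\<Sum>J\<in>FF n. if t \<in> C3 J \<and> ?nt t then 1 else 0) = W p n t" .
  qed
  finally show ?thesis .
qed

lemma perms_len: "p \<in> perms n \<Longrightarrow> length p = n"
  unfolding perms_def using distinct_card by fastforce

lemma geo_low:
  assumes "\<forall>a<m. e a = 1 \<or> e a = (-1::int)"
  shows "(\<Sum>a<m. 2^a * e a) \<ge> 1 - 2^m"
  using assms
proof (induction m)
  case 0 then show ?case by simp
next
  case (Suc m)
  then have "(\<Sum>a<m. 2^a * e a) \<ge> 1 - 2^m" by auto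
  moreover have "2^m * e m \<ge> - (2^m)" using Suc.prems by auto
  ultimately show ?case by simp
qed

lemma geo_pos:
  assumes "\<forall>a<m. e a = 1 \<or> e a = (-1::int)" "0 < m" "e (m-1) = 1"
  shows "(\<Sum>a<m. 2^a * e a) \<ge> 1"
proof -
  obtain m' where m: "m = Suc m'" using assms(2) by (cases m) auto
  have "(\<Sum>a<m'. 2^a * e a) \<ge> 1 - 2^m'" using geo_low[of m' e] assms(1) m by auto
  then show ?thesis using assms(3) m by simp
qed

lemma geo_nonneg:
  assumes "\<forall>a<m. e a = 1 \<or> e a = (-1::int)" "m = 0 \<or> e (m-1) = 1"
  shows "(\<Sum>a<m. 2^a * e a) \<ge> 0"
  using geo_pos[of m e] assms by (cases "m = 0") auto

lemma xor1:
  fixes w y z :: nat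
  assumes "w \<noteq> y" "w \<noteq> z" "y = z+1 \<or> z = y+1"
  shows "((w<z \<and> y<z) \<or> (z<w \<and> z<y)) \<longleftrightarrow> \<not>((w<y \<and> z<y) \<or> (y<w \<and> y<z))"
  using assms by auto

lemma lone:
  fixes w y z :: nat
  assumes "w \<noteq> y" "w \<noteq> z" "y = z+1 \<or> z = y+1" "w < y \<longleftrightarrow> y < z"
  shows "((w<z \<and> y<z) \<or> (z<w \<and> z<y)) \<and> \<not>((w<y \<and> z<y) \<or> (y<w \<and> y<z))"
  using assms by auto

lemma xor2:
  fixes w y z :: nat
  assumes "w \<noteq> y" "w \<noteq> z" "y = z+1 \<or> z = y+1"
  shows "((z<y \<and> w<y) \<or> (y<z \<and> y<w)) \<longleftrightarrow> \<not>((y<z \<and> w<z) \<or> (z<y \<and> z<w))"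
  using assms by auto

lemma ltwo:
  fixes w y z :: nat
  assumes "w \<noteq> y" "w \<noteq> z" "y = z+1 \<or> z = y+1" "z < w \<longleftrightarrow> y < z"
  shows "((z<y \<and> w<y) \<or> (y<z \<and> y<w)) \<and> \<not>((y<z \<and> w<z) \<or> (z<y \<and> z<w))"
  using assms by auto

lemma swap_improves:
  assumes p: "p \<in> perms n" and jk: "j < k" "k < n"
  and yz: "p!j = p!k + 1 \<or> p!k = p!j + 1"
  and L: "j = 0 \<or> (p!(j-1) < p!j \<longleftrightarrow> p!j < p!k)"
  and R: "k = n-1 \<or> (p!k < p!(k+1) \<longleftrightarrow> p!j < p!k)"
  and nb: "\<not> (j = 0 \<and> k = n-1)"
  shows "p[j := p!k, k := p!j] \<in> perms n \<and> tstat p < tstat (p[j := p!k, k := p!j])"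
proof -
  define q where "q = p[j := p!k, k := p!j]"
  have len: "length p = n" using perms_len[OF p] .
  have lq: "length q = n" using len by (simp add: q_def)
  have ms: "mset q = mset p" unfolding q_def using mset_swap[of k p j] jk len by simp
  have qp: "q \<in> perms n" using p mset_eq_setD[OF ms] mset_eq_imp_distinct_iff[OF ms] by (auto simp: perms_def)
  have dp: "distinct p" using p by (auto simp: perms_def)
  have qv: "q!i = (if i = k then p!j else if i = j then p!k else p!i)" if "i < n" for i
    using that jk len by (auto simp: q_def nth_list_update)
  have ne: "p!u \<noteq> p!v" if "u < n" "v < n" "u \<noteq> v" for u v
    using dp that len nth_eq_iff_index_eq by metis
  have other: "(p!k < p!u \<longleftrightarrow> p!j < p!u) \<and> (p!u < p!k \<longleftrightarrow> p!u < p!j)" if "u < n" "u \<noteq> j" "u \<noteq> k" for u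
    using ne[of u j] ne[of u k] that jk yz by auto
  have cmp: "(q!u < q!v) = (p!u < p!v)"
    if "u < n" "v < n" "u \<noteq> v" "\<not> (u = j \<and> v = k)" "\<not> (u = k \<and> v = j)" for u v
  proof -
    have "u = j \<or> u = k \<or> (u \<noteq> j \<and> u \<noteq> k)" by auto
    moreover have "v = j \<or> v = k \<or> (v \<noteq> j \<and> v \<noteq> k)" by auto
    ultimately show ?thesis
      using that other[of u] other[of v] qv[of u] qv[of v] jk by auto
  qed
  have zero: "nm q a b c = nm p a b c" if "(a,b,c) \<in> Tri n" "\<not> (b = j \<and> c = k)" "\<not> (a = j \<and> b = k)" for a b c
  proof -
    have abc: "a < b" "b < c" "c < n" using that by (auto simp: Tri_def)
    have "(q!a < q!b) = (p!a < p!b)" using cmp[of a b] abc that jk by auto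
    moreover have "(q!b < q!a) = (p!b < p!a)" using cmp[of b a] abc that jk by auto
    moreover have "(q!c < q!b) = (p!c < p!b)" using cmp[of c b] abc that jk by auto
    moreover have "(q!b < q!c) = (p!b < p!c)" using cmp[of b c] abc that jk by auto
    ultimately show ?thesis unfolding nm_def by simp
  qed
  define D where "D t = int (W q n t) - int (W p n t)" for t
  define S1 where "S1 = (\<lambda>a. (a,j,k)) ` {..<j}"
  define m where "m = n - 1 - k"
  define S2 where "S2 = (\<lambda>i. (j,k,n-1-i)) ` {..<m}"
  have sub: "S1 \<union> S2 \<subseteq> Tri n" using jk by (auto simp: S1_def S2_def Tri_def m_def)
  have D0: "\<forall>t\<in>Tri n - (S1 \<union> S2). D t = 0"
  proof
    fix t assume t: "t \<in> Tri n - (S1 \<union> S2)"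
    obtain a b c where tt: "t = (a,b,c)" by (cases t) auto
    have abc: "a < b" "b < c" "c < n" using t tt by (auto simp: Tri_def)
    have n1: "\<not> (b = j \<and> c = k)"
    proof
      assume "b = j \<and> c = k" then have "t \<in> S1" using tt abc by (auto simp: S1_def)
      then show False using t by auto
    qed
    have n2: "\<not> (a = j \<and> b = k)"
    proof
      assume h: "a = j \<and> b = k"
      have "n - 1 - c < m" "n - 1 - (n - 1 - c) = c" using abc h by (auto simp: m_def)
      then have "t \<in> S2" using tt h unfolding S2_def by (auto intro!: image_eqI[of _ _ "n-1-c"])
      then show False using t by auto
    qed
    show "D t = 0" using zero[OF _ n1 n2] t tt by (auto simp: D_def W_def)
  qed
  have dis: "S1 \<inter> S2 = {}" using jk by (auto simp: S1_def S2_def)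
  have "(\<Sum>t\<in>Tri n. D t) = (\<Sum>t\<in>S1 \<union> S2. D t)"
    by (rule sum.mono_neutral_right[OF finite_Tri sub D0])
  also have "\<dots> = (\<Sum>t\<in>S1. D t) + (\<Sum>t\<in>S2. D t)"
    by (rule sum.union_disjoint) (auto simp: S1_def S2_def dis)
  finally have sumD: "(\<Sum>t\<in>Tri n. D t) = (\<Sum>t\<in>S1. D t) + (\<Sum>t\<in>S2. D t)" .
  define e1 where "e1 a = (if nm q a j k then 1 else 0) - (if nm p a j k then 1 else (0::int))" for a
  define e2 where "e2 i = (if nm q j k (n-1-i) then 1 else 0) - (if nm p j k (n-1-i) then 1 else (0::int))" for i
  have "(\<Sum>t\<in>S1. D t) = (\<Sum>a<j. D (a,j,k))"
    unfolding S1_def by (subst sum.reindex) (auto simp: inj_on_def)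
  also have "\<dots> = (\<Sum>a<j. 2^(n-1-k) * (2^a * e1 a))"
    by (rule sum.cong) (auto simp: D_def W_def e1_def)
  also have "\<dots> = 2^(n-1-k) * (\<Sum>a<j. 2^a * e1 a)"
    by (simp add: sum_distrib_left)
  finally have s1: "(\<Sum>t\<in>S1. D t) = 2^(n-1-k) * (\<Sum>a<j. 2^a * e1 a)" .
  have "(\<Sum>t\<in>S2. D t) = (\<Sum>i<m. D (j,k,n-1-i))"
    unfolding S2_def by (subst sum.reindex) (auto simp: inj_on_def m_def)
  also have "\<dots> = (\<Sum>i<m. 2^j * (2^i * e2 i))"
  proof (rule sum.cong[OF refl])
    fix i assume "i \<in> {..<m}"
    then have "n - 1 - (n - 1 - i) = i" by (auto simp: m_def)
    then show "D (j,k,n-1-i) = 2^j * (2^i * e2 i)" by (auto simp: D_def W_def e2_def)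
  qed
  also have "\<dots> = 2^j * (\<Sum>i<m. 2^i * e2 i)"
    by (simp add: sum_distrib_left)
  finally have s2: "(\<Sum>t\<in>S2. D t) = 2^j * (\<Sum>i<m. 2^i * e2 i)" .
  have qj: "q!j = p!k" and qk: "q!k = p!j" using qv[of j] qv[of k] jk by auto
  have e1v: "\<forall>a<j. e1 a = 1 \<or> e1 a = -1"
  proof (intro allI impI)
    fix a assume a: "a < j"
    then have an: "a < n" "a \<noteq> j" "a \<noteq> k" using jk by auto
    then have "p!a \<noteq> p!j" "p!a \<noteq> p!k" using ne jk by auto
    moreover have "q!a = p!a" using qv[of a] an by simp
    ultimately show "e1 a = 1 \<or> e1 a = -1"
      using xor1[of "p!a" "p!j" "p!k"] yz unfolding e1_def nm_def qj qk by auto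
  qed
  have e1l: "j = 0 \<or> e1 (j-1) = 1"
  proof (cases "j = 0")
    case False
    then have a: "j - 1 < n" "j - 1 \<noteq> j" "j - 1 \<noteq> k" using jk by auto
    then have "p!(j-1) \<noteq> p!j" "p!(j-1) \<noteq> p!k" using ne jk by auto
    moreover have "q!(j-1) = p!(j-1)" using qv[of "j-1"] a by simp
    moreover have "p!(j-1) < p!j \<longleftrightarrow> p!j < p!k" using L False by auto
    ultimately have "e1 (j-1) = 1"
      using lone[of "p!(j-1)" "p!j" "p!k"] yz unfolding e1_def nm_def qj qk by auto
    then show ?thesis by auto
  qed simp
  have e2v: "\<forall>i<m. e2 i = 1 \<or> e2 i = -1"
  proof (intro allI impI)
    fix i assume i: "i < m"
    define c where "c = n - 1 - i"
    have cn: "c < n" "c \<noteq> j" "c \<noteq> k" using jk i by (auto simp: c_def m_def)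
    then have "p!c \<noteq> p!j" "p!c \<noteq> p!k" using ne jk by auto
    moreover have "q!c = p!c" using qv[of c] cn by simp
    ultimately show "e2 i = 1 \<or> e2 i = -1"
      using xor2[of "p!c" "p!j" "p!k"] yz unfolding e2_def nm_def c_def[symmetric] qj qk by auto
  qed
  have e2l: "m = 0 \<or> e2 (m-1) = 1"
  proof (cases "m = 0")
    case False
    have c: "n - 1 - (m - 1) = k + 1" using False jk by (auto simp: m_def)
    have a: "k + 1 < n" "k + 1 \<noteq> j" "k + 1 \<noteq> k" using jk False by (auto simp: m_def)
    then have "p!(k+1) \<noteq> p!j" "p!(k+1) \<noteq> p!k" using ne jk by auto
    moreover have "q!(k+1) = p!(k+1)" using qv[of "k+1"] a by simp
    moreover have "p!k < p!(k+1) \<longleftrightarrow> p!j < p!k" using R a by auto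
    ultimately have "e2 (m-1) = 1"
      using ltwo[of "p!(k+1)" "p!j" "p!k"] yz unfolding e2_def nm_def c qj qk by auto
    then show ?thesis by auto
  qed simp
  have g1: "(\<Sum>a<j. 2^a * e1 a) \<ge> 0" using geo_nonneg[OF e1v e1l] .
  have g2: "(\<Sum>i<m. 2^i * e2 i) \<ge> 0" using geo_nonneg[OF e2v e2l] .
  have "(\<Sum>a<j. 2^a * e1 a) \<ge> 1 \<or> (\<Sum>i<m. 2^i * e2 i) \<ge> 1"
  proof (cases "j = 0")
    case True
    then have "m > 0" using nb jk by (auto simp: m_def)
    then show ?thesis using geo_pos[OF e2v] e2l by auto
  next
    case False
    then show ?thesis using geo_pos[OF e1v] e1l by auto
  qed
  then have pos: "(\<Sum>t\<in>Tri n. D t) > 0" unfolding sumD s1 s2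
    using g1 g2 by (auto intro: add_pos_nonneg add_nonneg_pos)
  have "int (\<Sum>t\<in>Tri n. W q n t) - int (\<Sum>t\<in>Tri n. W p n t) = (\<Sum>t\<in>Tri n. D t)"
    by (simp add: D_def sum_subtractf)
  then have "(\<Sum>t\<in>Tri n. W p n t) < (\<Sum>t\<in>Tri n. W q n t)" using pos by linarith
  then have "tstat p < tstat q" using tstat_formula[OF len] tstat_formula[OF lq] by simp
  then show ?thesis using qp q_def by simp
qed

lemma finite_perms: "finite (perms n)"
  by (rule finite_subset[OF _ finite_lists_length_eq[of "{1..n}" n]])
     (auto simp: perms_def distinct_card[symmetric])

lemma no_swap:
  assumes p: "p \<in> RC n" and jk: "j < k" "k < n"
  and yz: "p!j = p!k + 1 \<or> p!k = p!j + 1"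
  and L: "j = 0 \<or> (p!(j-1) < p!j \<longleftrightarrow> p!j < p!k)"
  and R: "k = n-1 \<or> (p!k < p!(k+1) \<longleftrightarrow> p!j < p!k)"
  and nb: "\<not> (j = 0 \<and> k = n-1)"
  shows False
proof -
  have pp: "p \<in> perms n" and mx: "tstat p = Max (tstat ` perms n)" using p by (auto simp: RC_def)
  from swap_improves[OF pp jk yz L R nb] obtain q where "q \<in> perms n" "tstat p < tstat q" by blast
  moreover have "tstat q \<le> Max (tstat ` perms n)" using \<open>q \<in> perms n\<close> finite_perms by auto
  ultimately show False using mx by auto
qed

definition pk :: "nat list \<Rightarrow> nat \<Rightarrow> nat \<Rightarrow> bool" where
  "pk p n i = (0 < i \<and> i < n - 1 \<and> p!(i-1) < p!i \<and> p!(i+1) < p!i)"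
definition vl :: "nat list \<Rightarrow> nat \<Rightarrow> nat \<Rightarrow> bool" where
  "vl p n i = (0 < i \<and> i < n - 1 \<and> p!i < p!(i-1) \<and> p!i < p!(i+1))"

lemma f1: "p \<in> RC n \<Longrightarrow> pk p n i \<Longrightarrow> vl p n i' \<Longrightarrow> p!i + 1 = p!i' \<Longrightarrow> False"
proof -
  assume p: "p \<in> RC n" and a: "pk p n i" "vl p n i'" "p!i + 1 = p!i'"
  have n: "i < n - 1" "i' < n - 1" "0 < i" "0 < i'" using a by (auto simp: pk_def vl_def)
  have "i \<noteq> i'" using a by auto
  then have "i < i' \<or> i' < i" by auto
  then show False
  proof
    assume h: "i < i'"
    show False
    proof (rule no_swap[OF p h])
      show "i' < n" using n by auto
      show "p!i = p!i' + 1 \<or> p!i' = p!i + 1" using a by auto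
      show "i = 0 \<or> (p!(i-1) < p!i \<longleftrightarrow> p!i < p!i')" using a by (auto simp: pk_def)
      show "i' = n-1 \<or> (p!i' < p!(i'+1) \<longleftrightarrow> p!i < p!i')" using a by (auto simp: vl_def)
      show "\<not> (i = 0 \<and> i' = n-1)" using n by auto
    qed
  next
    assume h: "i' < i"
    show False
    proof (rule no_swap[OF p h])
      show "i < n" using n by auto
      show "p!i' = p!i + 1 \<or> p!i = p!i' + 1" using a by auto
      show "i' = 0 \<or> (p!(i'-1) < p!i' \<longleftrightarrow> p!i' < p!i)" using a by (auto simp: vl_def)
      show "i = n-1 \<or> (p!i < p!(i+1) \<longleftrightarrow> p!i' < p!i)" using a by (auto simp: pk_def)
      show "\<not> (i' = 0 \<and> i = n-1)" using n by auto
    qed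
  qed
qed

lemma f2: assumes p: "p \<in> RC n" and a: "pk p n i" and v: "p!0 = p!i + 1" shows False
proof (rule no_swap[OF p, of 0 i])
  show "0 < i" "i < n" using a by (auto simp: pk_def)
  show "p!0 = p!i + 1 \<or> p!i = p!0 + 1" using v by auto
  show "0 = 0 \<or> (p!(0-1) < p!0 \<longleftrightarrow> p!0 < p!i)" by auto
  show "i = n-1 \<or> (p!i < p!(i+1) \<longleftrightarrow> p!0 < p!i)" using a v by (auto simp: pk_def)
  show "\<not> (0 = 0 \<and> i = n-1)" using a by (auto simp: pk_def)
qed

lemma f2': assumes p: "p \<in> RC n" and a: "pk p n i" and v: "p!(n-1) = p!i + 1" shows False
proof (rule no_swap[OF p, of i "n-1"])
  show "i < n - 1" "n - 1 < n" using a by (auto simp: pk_def)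
  show "p!i = p!(n-1) + 1 \<or> p!(n-1) = p!i + 1" using v by auto
  show "i = 0 \<or> (p!(i-1) < p!i \<longleftrightarrow> p!i < p!(n-1))" using a v by (auto simp: pk_def)
  show "n-1 = n-1 \<or> (p!(n-1) < p!(n-1+1) \<longleftrightarrow> p!i < p!(n-1))" by auto
  show "\<not> (i = 0 \<and> n-1 = n-1)" using a by (auto simp: pk_def)
qed

lemma f3: assumes p: "p \<in> RC n" and a: "vl p n i" and v: "p!i = p!0 + 1" shows False
proof (rule no_swap[OF p, of 0 i])
  show "0 < i" "i < n" using a by (auto simp: vl_def)
  show "p!0 = p!i + 1 \<or> p!i = p!0 + 1" using v by auto
  show "0 = 0 \<or> (p!(0-1) < p!0 \<longleftrightarrow> p!0 < p!i)" by auto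
  show "i = n-1 \<or> (p!i < p!(i+1) \<longleftrightarrow> p!0 < p!i)" using a v by (auto simp: vl_def)
  show "\<not> (0 = 0 \<and> i = n-1)" using a by (auto simp: vl_def)
qed

lemma f3': assumes p: "p \<in> RC n" and a: "vl p n i" and v: "p!i = p!(n-1) + 1" shows False
proof (rule no_swap[OF p, of i "n-1"])
  show "i < n - 1" "n - 1 < n" using a by (auto simp: vl_def)
  show "p!i = p!(n-1) + 1 \<or> p!(n-1) = p!i + 1" using v by auto
  show "i = 0 \<or> (p!(i-1) < p!i \<longleftrightarrow> p!i < p!(n-1))" using a v by (auto simp: vl_def)
  show "n-1 = n-1 \<or> (p!(n-1) < p!(n-1+1) \<longleftrightarrow> p!i < p!(n-1))" by auto
  show "\<not> (i = 0 \<and> n-1 = n-1)" using a by (auto simp: vl_def)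
qed

lemma pos_of:
  assumes "p \<in> perms n" "1 \<le> v" "v \<le> n"
  shows "\<exists>i<n. p!i = v"
proof -
  have "v \<in> set p" using assms by (auto simp: perms_def)
  then show ?thesis using perms_len[OF assms(1)] by (auto simp: in_set_conv_nth)
qed

lemma pos_uniq:
  assumes "p \<in> perms n" "a < n" "b < n" "p!a = p!b"
  shows "a = b"
  using assms perms_len[OF assms(1)] nth_eq_iff_index_eq by (auto simp: perms_def)

lemma val_range:
  assumes "p \<in> perms n" "a < n"
  shows "1 \<le> p!a \<and> p!a \<le> n"
proof -
  have "p!a \<in> set p" using assms perms_len[OF assms(1)] by auto
  then show ?thesis using assms by (auto simp: perms_def)
qed

lemma peak_ends:
  assumes p: "p \<in> RC n" and n: "2 \<le> n"
  and turn: "\<forall>m. 0 < m \<and> m < n - 1 \<longrightarrow> pk p n m \<or> vl p n m"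
  and i: "pk p n i"
  shows "p!0 < p!i \<and> p!(n-1) < p!i"
proof -
  have pp: "p \<in> perms n" using p by (auto simp: RC_def)
  have up: "\<exists>i'. pk p n i' \<and> p!i' = p!i + d" if "p!i + d \<le> n" for d
    using that
  proof (induction d)
    case 0 then show ?case using i by auto
  next
    case (Suc d)
    then obtain i' where i': "pk p n i'" "p!i' = p!i + d" by auto
    obtain i'' where i'': "i'' < n" "p!i'' = p!i + Suc d" using pos_of[OF pp, of "p!i + Suc d"] Suc.prems by auto
    have "i'' \<noteq> 0"
    proof
      assume "i'' = 0" then have "p!0 = p!i' + 1" using i'' i' by auto
      then show False using f2[OF p i'(1)] by auto
    qed
    moreover have "i'' \<noteq> n - 1"
    proof
      assume "i'' = n - 1" then have "p!(n-1) = p!i' + 1" using i'' i' by auto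
      then show False using f2'[OF p i'(1)] by auto
    qed
    ultimately have "pk p n i'' \<or> vl p n i''" using turn i'' by auto
    moreover have "\<not> vl p n i''" using f1[OF p i'(1), of i''] i'' i' by auto
    ultimately show ?case using i'' by auto
  qed
  have ie: "0 < i" "i < n - 1" using i by (auto simp: pk_def)
  have e: "p!e < p!i" if "e < n" "e = 0 \<or> e = n - 1" for e
  proof (rule ccontr)
    assume "\<not> p!e < p!i"
    then have "p!i + (p!e - p!i) \<le> n" using val_range[OF pp that(1)] by auto
    then obtain i' where "pk p n i'" "p!i' = p!i + (p!e - p!i)" using up by blast
    moreover have "p!i + (p!e - p!i) = p!e" using \<open>\<not> p!e < p!i\<close> by auto
    ultimately have "pk p n i'" "p!i' = p!e" by auto
    moreover then have "i' < n" by (auto simp: pk_def)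
    ultimately have "i' = e" using pos_uniq[OF pp] that by blast
    then show False using \<open>pk p n i'\<close> that by (auto simp: pk_def)
  qed
  show ?thesis using e[of 0] e[of "n-1"] n by auto
qed

lemma valley_ends:
  assumes p: "p \<in> RC n" and n: "2 \<le> n"
  and turn: "\<forall>m. 0 < m \<and> m < n - 1 \<longrightarrow> pk p n m \<or> vl p n m"
  and i: "vl p n i"
  shows "p!i < p!0 \<and> p!i < p!(n-1)"
proof -
  have pp: "p \<in> perms n" using p by (auto simp: RC_def)
  have dn: "\<exists>i'. vl p n i' \<and> p!i' + d = p!i" if "d < p!i" for d
    using that
  proof (induction d)
    case 0 then show ?case using i by auto
  next
    case (Suc d)
    then obtain i' where i': "vl p n i'" "p!i' + d = p!i" by auto
    have "p!i \<le> n" using val_range[OF pp, of i] i by (auto simp: vl_def)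
    then have "p!i - Suc d \<le> n" by linarith
    moreover have "1 \<le> p!i - Suc d" using Suc.prems by linarith
    ultimately have "\<exists>i''<n. p!i'' = p!i - Suc d" using pos_of[OF pp, of "p!i - Suc d"] by blast
    then obtain i'' where i'': "i'' < n" "p!i'' = p!i - Suc d" by blast
    have v: "p!i'' + 1 = p!i'" using i'' i' Suc.prems by auto
    have "i'' \<noteq> 0"
    proof
      assume "i'' = 0" then have "p!i' = p!0 + 1" using v by auto
      then show False using f3[OF p i'(1)] by auto
    qed
    moreover have "i'' \<noteq> n - 1"
    proof
      assume "i'' = n - 1" then have "p!i' = p!(n-1) + 1" using v by auto
      then show False using f3'[OF p i'(1)] by auto
    qed
    ultimately have "pk p n i'' \<or> vl p n i''" using turn i'' by auto
    moreover have "\<not> pk p n i''" using f1[OF p _ i'(1), of i''] v by auto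
    ultimately show ?case using i'' Suc.prems by auto
  qed
  have e: "p!i < p!e" if "e < n" "e = 0 \<or> e = n - 1" for e
  proof (rule ccontr)
    assume "\<not> p!i < p!e"
    then have "p!i - p!e < p!i" using val_range[OF pp that(1)] by auto
    then obtain i' where "vl p n i'" "p!i' + (p!i - p!e) = p!i" using dn by blast
    then have "vl p n i'" "p!i' = p!e" using \<open>\<not> p!i < p!e\<close> by auto
    moreover then have "i' < n" by (auto simp: vl_def)
    ultimately have "i' = e" using pos_uniq[OF pp] that by blast
    then show False using \<open>vl p n i'\<close> that by (auto simp: vl_def)
  qed
  show ?thesis using e[of 0] e[of "n-1"] n by auto
qed

lemma alt_case:
  assumes "n \<ge> 2" and "p \<in> RC n" and alt: "alternating p"
  shows "\<forall>i. 1 < i \<and> i < n \<longrightarrow>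
               (even i \<longrightarrow> ent p i > max (ent p 1) (ent p n)) \<and>
               (odd i \<longrightarrow> ent p i < min (ent p 1) (ent p n))"
proof (intro allI impI)
  have pp: "p \<in> perms n" using assms by (auto simp: RC_def)
  have len: "length p = n" using perms_len[OF pp] .
  have tp: "(odd m \<longrightarrow> pk p n m) \<and> (even m \<longrightarrow> vl p n m)" if "0 < m" "m < n - 1" for m
  proof -
    have A: "if odd m then p!(m-1) < p!m else p!(m-1) > p!m"
      using alt[unfolded alternating_def, rule_format, of m] that len by auto
    have B: "if odd (m+1) then p!m < p!(m+1) else p!m > p!(m+1)"
      using alt[unfolded alternating_def, rule_format, of "m+1"] that len by auto
    show ?thesis using A B that by (auto simp: pk_def vl_def)
  qed
  then have turn: "\<forall>m. 0 < m \<and> m < n - 1 \<longrightarrow> pk p n m \<or> vl p n m" by blast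
  fix i assume i: "1 < i \<and> i < n"
  then have m: "0 < i - 1" "i - 1 < n - 1" by auto
  have "even i \<longrightarrow> ent p i > max (ent p 1) (ent p n)"
    using peak_ends[OF assms(2,1) turn] tp[OF m] i by auto
  moreover have "odd i \<longrightarrow> ent p i < min (ent p 1) (ent p n)"
    using valley_ends[OF assms(2,1) turn] tp[OF m] i by auto
  ultimately show "(even i \<longrightarrow> ent p i > max (ent p 1) (ent p n)) \<and>
               (odd i \<longrightarrow> ent p i < min (ent p 1) (ent p n))" by blast
qed

lemma ralt_case:
  assumes "n \<ge> 2" and "p \<in> RC n" and alt: "rev_alternating p"
  shows "\<forall>i. 1 < i \<and> i < n \<longrightarrow>
               (even i \<longrightarrow> ent p i < min (ent p 1) (ent p n)) \<and>
               (odd i \<longrightarrow> ent p i > max (ent p 1) (ent p n))"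
proof (intro allI impI)
  have pp: "p \<in> perms n" using assms by (auto simp: RC_def)
  have len: "length p = n" using perms_len[OF pp] .
  have tp: "(odd m \<longrightarrow> vl p n m) \<and> (even m \<longrightarrow> pk p n m)" if "0 < m" "m < n - 1" for m
  proof -
    have A: "if odd m then p!(m-1) > p!m else p!(m-1) < p!m"
      using alt[unfolded rev_alternating_def, rule_format, of m] that len by auto
    have B: "if odd (m+1) then p!m > p!(m+1) else p!m < p!(m+1)"
      using alt[unfolded rev_alternating_def, rule_format, of "m+1"] that len by auto
    show ?thesis using A B that by (auto simp: pk_def vl_def)
  qed
  then have turn: "\<forall>m. 0 < m \<and> m < n - 1 \<longrightarrow> pk p n m \<or> vl p n m" by blast
  fix i assume i: "1 < i \<and> i < n"
  then have m: "0 < i - 1" "i - 1 < n - 1" by auto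
  have "even i \<longrightarrow> ent p i < min (ent p 1) (ent p n)"
    using valley_ends[OF assms(2,1) turn] tp[OF m] i by auto
  moreover have "odd i \<longrightarrow> ent p i > max (ent p 1) (ent p n)"
    using peak_ends[OF assms(2,1) turn] tp[OF m] i by auto
  ultimately show "(even i \<longrightarrow> ent p i < min (ent p 1) (ent p n)) \<and>
               (odd i \<longrightarrow> ent p i > max (ent p 1) (ent p n))" by blast
qed

theorem mainTheorem3:
  fixes n :: nat and p :: "nat list"
  assumes "n \<ge> 2" and "p \<in> RC n"
  shows "(alternating p \<longrightarrow>
            (\<forall>i. 1 < i \<and> i < n \<longrightarrow>
               (even i \<longrightarrow> ent p i > max (ent p 1) (ent p n)) \<and>
               (odd i \<longrightarrow> ent p i < min (ent p 1) (ent p n))))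
       \<and> (rev_alternating p \<longrightarrow>
            (\<forall>i. 1 < i \<and> i < n \<longrightarrow>
               (even i \<longrightarrow> ent p i < min (ent p 1) (ent p n)) \<and>
               (odd i \<longrightarrow> ent p i > max (ent p 1) (ent p n))))"
  using alt_case[OF assms] ralt_case[OF assms] by blast

end
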